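(* Let $0\le s\le n$ and let $\mathbb{T}$ be a variational morphism of rank $r-1$ and degree $n-s$ on $W$, given for every $\pi$-vertical vector field $\Xi$ on $W$ by $$\langle\mathbb{T}|J^{r-1}\Xi\rangle=\Big(\sum_{|J|=0}^{r-1}t^{i_1\dots i_sJ}_\sigma\Xi^\sigma_J\Big)\wedge ds_{i_1\dots i_s},$$ with coefficients $t^{i_1\dots i_sJ}_\sigma$ (functions on some jet prolongation $W^t$) antisymmetric in $i_1\dots i_s$ and symmetric in the indices of $J$. Define the $(n-s)$-horizontal $1$-contact $(n-s+1)$-form $$\tilde{\mathcal{R}}=\Big(\sum_{|J|=0}^{r-1}-t^{i_1\dots i_sJ}_\sigma\,\omega^\sigma_J\Big)\wedge ds_{i_1\dots i_s}.$$ Then for every $\pi$-vertical vector field $\Xi$ on $W$, $$\mathrm{Div}\big(\langle\mathbb{T}|J^{r-1}\Xi\rangle\big)=J^r\Xi\lrcorner\,d_H\tilde{\mathcal{R}}.$$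
   Context: Let $\pi:Y\to X$ be a fibered manifold, $n=\dim X$, $m=\dim Y-n$. Let $U\subseteq X$ be open and $W=\pi^{-1}(U)$ the domain of a fibered chart $(x^i,y^\sigma)$ with associated jet coordinates $(x^i,y^\sigma_J)$ on $W^r\subseteq J^rY$, $J$ a multi-index of length $|J|\le r$ ($y^\sigma_J$ symmetric in $J$); sums over multi-indices run over all index tuples and repeated indices are summed. Contact forms: $\omega^\sigma_J=dy^\sigma_J-y^\sigma_{Ji}dx^i$. $ds=dx^1\wedge\dots\wedge dx^n$, $ds_{i_1\dots i_s}=\frac{\partial}{\partial x^{i_s}}\lrcorner\dots\lrcorner\frac{\partial}{\partial x^{i_1}}\lrcorner ds$. Formal derivative $d_i=\frac{\partial}{\partial x^i}+\sum_J y^\sigma_{Ji}\frac{\partial}{\partial y^\sigma_J}$ on functions; the total derivative of forms $\mathrm{d}_i$ equals $d_i$ on functions, obeys the Leibniz rule with respect to $\wedge$, and $\mathrm{d}_idx^j=0$, $\mathrm{d}_i\omega^\sigma_J=\omega^\sigma_{Ji}$. The horizontal differential of a $q$-form is $d_H\rho=(-1)^q\mathrm{d}_i\rho\wedge dx^i$. A form is $p$-horizontal if each term contains exactly $p$ factors $dx^i$, and $1$-contact if each term contains exactly one factor $\omega^\sigma_J$. For a $\pi$-vertical vector field $\Xi=\Xi^\sigma\partial/\partial y^\sigma$, $J^r\Xi=\sum_{|J|\le r}\Xi^\sigma_J\partial/\partial y^\sigma_J$ with $\Xi^\sigma_J=d_J\Xi^\sigma$. For a horizontal form $\beta=f^{i_1\dots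 i_p}ds_{i_1\dots i_p}$ with coefficients depending on $x$, jets of $y$ and jets of $\Xi$, $\mathrm{Div}(\beta)=d_lf^{i_1\dots i_p}\,dx^l\wedge ds_{i_1\dots i_p}$, where $d_l$ acts as formal derivative also on the $\Xi$-variables ($d_l\Xi^\sigma_J=\Xi^\sigma_{Jl}$). *)

theory Defs
  imports "HOL-Analysis.Analysis" "HOL-Library.Multiset" "HOL-Combinatorics.Permutations"
begin

text \<open>Jet coordinates: x^i (index type 'n, n = CARD('n)) and y^sigma_J
  (sigma :: 'm, m = CARD('m); J a multi-index, represented as a multiset since
  y^sigma_J is symmetric in J).\<close>
datatype ('n, 'm) coord = X 'n | Y 'm "'n multiset"

type_synonym ('n, 'm) pt = "('n, 'm) coord \<Rightarrow> real"

fun cord :: "('n, 'm) coord \<Rightarrow> nat" where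
  "cord (X i) = 0"
| "cord (Y s J) = size J"

definition Dom :: "(('n \<Rightarrow> real) \<times> ('m \<Rightarrow> real)) set \<Rightarrow> ('n, 'm) pt set" where
  "Dom W = {p. ((\<lambda>i. p (X i)), (\<lambda>s. p (Y s {#}))) \<in> W}"

definition pd :: "'c \<Rightarrow> (('c \<Rightarrow> real) \<Rightarrow> real) \<Rightarrow> ('c \<Rightarrow> real) \<Rightarrow> real" where
  "pd c f p = deriv (\<lambda>h. f (p(c := p c + h))) 0"

fun pds :: "'c list \<Rightarrow> (('c \<Rightarrow> real) \<Rightarrow> real) \<Rightarrow> ('c \<Rightarrow> real) \<Rightarrow> real" where
  "pds [] f = f"
| "pds (c # cs) f = pd c (pds cs f)"

definition smooth_on :: "('c \<Rightarrow> real) set \<Rightarrow> (('c \<Rightarrow> real) \<Rightarrow> real) \<Rightarrow> bool" where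
  "smooth_on D f \<longleftrightarrow> (\<forall>cs. (\<forall>p\<in>D. \<forall>c. (\<lambda>h. pds cs f (p(c := p c + h))) differentiable (at 0))
                         \<and> continuous_on D (pds cs f))"

text \<open>f is a function on W^k: it depends only on the coordinates x^i, y^sigma_J with |J| <= k.\<close>
definition depends_upto :: "nat \<Rightarrow> (('n, 'm) pt \<Rightarrow> real) \<Rightarrow> bool" where
  "depends_upto k f \<longleftrightarrow> (\<forall>p q. (\<forall>c. cord c \<le> k \<longrightarrow> p c = q c) \<longrightarrow> f p = f q)"

definition ford :: "(('n, 'm) pt \<Rightarrow> real) \<Rightarrow> nat" where
  "ford f = (LEAST k. depends_upto k f)"

definition fd :: "'n::finite \<Rightarrow> (('n, 'm::finite) pt \<Rightarrow> real) \<Rightarrow> ('n, 'm) pt \<Rightarrow> real" where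
  "fd i f p = pd (X i) f p
     + (\<Sum>s\<in>UNIV. \<Sum>J\<in>{J::'n multiset. size J \<le> ford f}. p (Y s (J + {#i#})) * pd (Y s J) f p)"

datatype ('n, 'm) b1 = DX 'n | OM 'm "'n multiset"

text \<open>A form is a finite formal sum of monomials  c * b_1 /\ ... /\ b_k .\<close>
type_synonym ('n, 'm) form = "((('n, 'm) pt \<Rightarrow> real) \<times> ('n, 'm) b1 list) list"

text \<open>Value of a basic 1-form on a tangent vector v at p;
  omega^sigma_J = dy^sigma_J - y^sigma_{Ji} dx^i.\<close>
fun ev1 :: "('n::finite, 'm) pt \<Rightarrow> ('n, 'm) b1 \<Rightarrow> ('n, 'm) pt \<Rightarrow> real" where
  "ev1 p (DX i) v = v (X i)"
| "ev1 p (OM s J) v = v (Y s J) - (\<Sum>i\<in>UNIV. p (Y s (J + {#i#})) * v (X i))"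

definition mono_eval :: "('n::finite, 'm) pt \<Rightarrow> (('n, 'm) pt \<Rightarrow> real) \<Rightarrow> ('n, 'm) b1 list
     \<Rightarrow> ('n, 'm) pt list \<Rightarrow> real" where
  "mono_eval p c bs vs = (if length vs = length bs then
      c p * (\<Sum>\<pi> | \<pi> permutes {..<length bs}.
               of_int (sign \<pi>) * (\<Prod>a<length bs. ev1 p (bs ! a) (vs ! (\<pi> a))))
    else 0)"

definition form_eval :: "('n::finite, 'm) pt \<Rightarrow> ('n, 'm) form \<Rightarrow> ('n, 'm) pt list \<Rightarrow> real" where
  "form_eval p A vs = sum_list (map (\<lambda>(c, bs). mono_eval p c bs vs) A)"

definition form_eq :: "('n::finite, 'm) pt set \<Rightarrow> ('n, 'm) form \<Rightarrow> ('n, 'm) form \<Rightarrow> bool" where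
  "form_eq D A B \<longleftrightarrow> (\<forall>p\<in>D. \<forall>vs. form_eval p A vs = form_eval p B vs)"

definition wedge :: "('n, 'm) form \<Rightarrow> ('n, 'm) form \<Rightarrow> ('n, 'm) form" where
  "wedge A B = concat (map (\<lambda>(c, bs). map (\<lambda>(d, es). ((\<lambda>p. c p * d p), bs @ es)) B) A)"

definition fsum :: "'a set \<Rightarrow> ('a \<Rightarrow> ('n, 'm) form) \<Rightarrow> ('n, 'm) form" where
  "fsum A g = concat (map g (SOME xs. distinct xs \<and> set xs = A))"

definition contr :: "(('n::finite, 'm) pt \<Rightarrow> ('n, 'm) pt) \<Rightarrow> ('n, 'm) form \<Rightarrow> ('n, 'm) form" where
  "contr xi A = concat (map (\<lambda>(c, bs). map (\<lambda>a.
       ((\<lambda>p. (-1) ^ a * c p * ev1 p (bs ! a) (xi p)), take a bs @ drop (Suc a) bs))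
     [0..<length bs]) A)"

definition dxvec :: "'n \<Rightarrow> ('n, 'm) pt \<Rightarrow> ('n, 'm) pt" where
  "dxvec i p = (\<lambda>c. if c = X i then 1 else 0)"

definition ds :: "('n::{finite,linorder}, 'm) form" where
  "ds = [((\<lambda>_. 1), map DX (sorted_list_of_set (UNIV :: 'n set)))]"

definition dsI :: "'n::{finite,linorder} list \<Rightarrow> ('n, 'm) form" where
  "dsI I = fold (\<lambda>i \<rho>. contr (dxvec i) \<rho>) I ds"

text \<open>Total derivative of forms: Leibniz rule, d_i dx^j = 0, d_i omega^sigma_J = omega^sigma_{Ji}.\<close>
fun dshift :: "'n \<Rightarrow> ('n, 'm) b1 \<Rightarrow> ('n, 'm) b1 option" where
  "dshift i (DX j) = None"
| "dshift i (OM s J) = Some (OM s (J + {#i#}))"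

definition tot_d :: "'n::finite \<Rightarrow> ('n, 'm::finite) form \<Rightarrow> ('n, 'm) form" where
  "tot_d i A = concat (map (\<lambda>(c, bs). (fd i c, bs) #
      concat (map (\<lambda>a. case dshift i (bs ! a) of None \<Rightarrow> [] | Some b \<Rightarrow> [(c, bs[a := b])])
                  [0..<length bs])) A)"

definition dH :: "('n::finite, 'm::finite) form \<Rightarrow> ('n, 'm) form" where
  "dH A = concat (map (\<lambda>(c, bs).
      fsum UNIV (\<lambda>i. map (\<lambda>(c', bs'). ((\<lambda>p. (-1) ^ length bs * c' p), bs' @ [DX i]))
                           (tot_d i [(c, bs)]))) A)"

definition xijet :: "('m \<Rightarrow> ('n::{finite,linorder}, 'm::finite) pt \<Rightarrow> real) \<Rightarrow> 'm \<Rightarrow> 'n multiset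
     \<Rightarrow> ('n, 'm) pt \<Rightarrow> real" where
  "xijet Xi s J = fold fd (sorted_list_of_multiset J) (Xi s)"

definition jprol :: "nat \<Rightarrow> ('m \<Rightarrow> ('n::{finite,linorder}, 'm::finite) pt \<Rightarrow> real)
     \<Rightarrow> ('n, 'm) pt \<Rightarrow> ('n, 'm) pt" where
  "jprol r Xi p = (\<lambda>c. case c of X i \<Rightarrow> 0
                               | Y s J \<Rightarrow> (if size J \<le> r then xijet Xi s J p else 0))"

text \<open>Coefficients of forms depending on x, jets of y and formal jet variables
  xi(sigma, J) standing for Xi^sigma_J.\<close>
type_synonym ('n, 'm) xcoef = "('n, 'm) pt \<Rightarrow> ('m \<times> 'n multiset \<Rightarrow> real) \<Rightarrow> real"

definition dependsF :: "nat \<Rightarrow> ('n, 'm) xcoef \<Rightarrow> bool" where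
  "dependsF k F \<longleftrightarrow> (\<forall>p p' \<xi> \<xi>'. (\<forall>c. cord c \<le> k \<longrightarrow> p c = p' c)
       \<longrightarrow> (\<forall>s J. size J \<le> k \<longrightarrow> \<xi> (s, J) = \<xi>' (s, J)) \<longrightarrow> F p \<xi> = F p' \<xi>')"

definition fordF :: "('n, 'm) xcoef \<Rightarrow> nat" where
  "fordF F = (LEAST k. dependsF k F)"

text \<open>Formal derivative acting also on the Xi-variables (d_l Xi^sigma_J = Xi^sigma_{Jl}).\<close>
definition fdX :: "'n::finite \<Rightarrow> ('n, 'm::finite) xcoef \<Rightarrow> ('n, 'm) xcoef" where
  "fdX l F p \<xi> = pd (X l) (\<lambda>q. F q \<xi>) p
     + (\<Sum>s\<in>UNIV. \<Sum>J\<in>{J::'n multiset. size J \<le> fordF F}. p (Y s (J + {#l#})) * pd (Y s J) (\<lambda>q. F q \<xi>) p)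
     + (\<Sum>s\<in>UNIV. \<Sum>J\<in>{J::'n multiset. size J \<le> fordF F}. \<xi> (s, J + {#l#}) * pd (s, J) (F p) \<xi>)"

text \<open>For beta = f^{i_1...i_s} ds_{i_1...i_s} (sum over all index tuples I of length s),
  Div(beta) = d_l f^{I} dx^l /\ ds_I, evaluated along the jets of Xi.\<close>
definition Div :: "('m \<Rightarrow> ('n::{finite,linorder}, 'm::finite) pt \<Rightarrow> real) \<Rightarrow> nat
     \<Rightarrow> ('n list \<Rightarrow> ('n, 'm) xcoef) \<Rightarrow> ('n, 'm) form" where
  "Div Xi s f = fsum {I. length I = s} (\<lambda>I. fsum UNIV (\<lambda>l.
      wedge [((\<lambda>p. fdX l (f I) p (\<lambda>(\<sigma>, J). xijet Xi \<sigma> J p)), [DX l])] (dsI I)))"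

text \<open>Coefficients of <T | J^{r-1} Xi> = (sum_{|J|<=r-1} t^{I J}_sigma Xi^sigma_J) /\ ds_I,
  with Xi^sigma_J as formal variables (J runs over index tuples, I over tuples of length s).\<close>
definition Tpair :: "nat \<Rightarrow> ('n list \<Rightarrow> 'n list \<Rightarrow> 'm \<Rightarrow> ('n::finite, 'm::finite) pt \<Rightarrow> real)
     \<Rightarrow> 'n list \<Rightarrow> ('n, 'm) xcoef" where
  "Tpair r t I p \<xi> = (\<Sum>J\<in>{J::'n list. length J < r}. \<Sum>\<sigma>\<in>UNIV. t I J \<sigma> p * \<xi> (\<sigma>, mset J))"

definition Rt :: "nat \<Rightarrow> nat \<Rightarrow> ('n list \<Rightarrow> 'n list \<Rightarrow> 'm \<Rightarrow> ('n::{finite,linorder}, 'm::finite) pt \<Rightarrow> real)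
     \<Rightarrow> ('n, 'm) form" where
  "Rt s r t = fsum {I. length I = s} (\<lambda>I. fsum {J. length J < r} (\<lambda>J. fsum UNIV (\<lambda>\<sigma>.
      wedge [((\<lambda>p. - t I J \<sigma> p), [OM \<sigma> (mset J)])] (dsI I))))"

end

theory Submission
  imports Defs
begin


lemma fin_lists_lt: "finite {J::'n::finite list. length J < r}"
proof -
  have "{J::'n list. length J < r} \<subseteq> {xs. set xs \<subseteq> UNIV \<and> length xs \<le> r}" by auto
  thus ?thesis using finite_lists_length_le[of "UNIV::'n set" r] finite_subset by auto
qed

lemma fin_msets: "finite {J::'n::finite multiset. size J \<le> K}"
proof -
  have "{J::'n multiset. size J \<le> K} \<subseteq> mset ` {xs. set xs \<subseteq> UNIV \<and> length xs \<le> K}"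
  proof
    fix J :: "'n multiset" assume "J \<in> {J. size J \<le> K}"
    moreover obtain xs where "mset xs = J" using ex_mset by blast
    ultimately show "J \<in> mset ` {xs. set xs \<subseteq> UNIV \<and> length xs \<le> K}"
      by (auto intro!: image_eqI[of _ _ xs])
  qed
  thus ?thesis by (rule finite_subset[OF _ finite_imageI[OF finite_lists_length_le]]) simp
qed

definition E :: "('n::finite, 'm) pt \<Rightarrow> ('n, 'm) b1 list \<Rightarrow> ('n, 'm) pt list \<Rightarrow> real" where
  "E p bs vs = mono_eval p (\<lambda>_. 1) bs vs"

lemma mono_E: "mono_eval p c bs vs = c p * E p bs vs"
  by (simp add: E_def mono_eval_def)

lemma fe_list: "form_eval p A vs = (\<Sum>m\<leftarrow>A. fst m p * E p (snd m) vs)"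
  unfolding form_eval_def by (rule arg_cong[of _ _ sum_list]) (auto simp: mono_E)

lemma fe_append[simp]: "form_eval p (A @ B) vs = form_eval p A vs + form_eval p B vs"
  by (simp add: form_eval_def)

lemma fe_concat: "form_eval p (concat L) vs = (\<Sum>A\<leftarrow>L. form_eval p A vs)"
  by (induction L) (auto simp: form_eval_def)

lemma fe_fsum: "finite A \<Longrightarrow> form_eval p (fsum A g) vs = (\<Sum>x\<in>A. form_eval p (g x) vs)"
proof -
  assume "finite A"
  then obtain xs where "distinct xs \<and> set xs = A" using finite_distinct_list by blast
  hence h: "distinct (SOME xs. distinct xs \<and> set xs = A) \<and> set (SOME xs. distinct xs \<and> set xs = A) = A"
    by (rule someI)
  show ?thesis unfolding fsum_def fe_concat map_map o_def
    using sum_list_distinct_conv_sum_set[of "SOME xs. distinct xs \<and> set xs = A" "\<lambda>x. form_eval p (g x) vs"] h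
    by (simp add: o_def)
qed

lemma dH_concat: "dH (concat L) = concat (map dH L)"
  by (induction L) (auto simp: dH_def)
lemma contr_concat: "contr xi (concat L) = concat (map (contr xi) L)"
  by (induction L) (auto simp: contr_def)
lemma dH_fsum: "dH (fsum A g) = fsum A (\<lambda>x. dH (g x))"
  unfolding fsum_def dH_concat by (simp add: o_def)
lemma contr_fsum: "contr xi (fsum A g) = fsum A (\<lambda>x. contr xi (g x))"
  unfolding fsum_def contr_concat by (simp add: o_def)
lemma dH_split: "dH A = concat (map (\<lambda>m. dH [m]) A)"
  unfolding dH_def by (induction A) auto
lemma contr_split: "contr xi A = concat (map (\<lambda>m. contr xi [m]) A)"
  unfolding contr_def by (induction A) auto

lemma wedge1: "wedge [(c, [b])] B = map (\<lambda>(d, es). ((\<lambda>p. c p * d p), b # es)) B"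
  unfolding wedge_def by simp



lemma E_perm:
  assumes sg: "\<sigma> permutes {..<length bs}" and len: "length bs' = length bs"
    and nth: "\<forall>a<length bs. bs' ! a = bs ! (\<sigma> a)"
  shows "E p bs' vs = of_int (sign \<sigma>) * E p bs vs"
proof (cases "length vs = length bs")
  case False thus ?thesis using len by (simp add: E_def mono_eval_def)
next
  case True
  let ?n = "length bs"
  let ?S = "{\<pi>. \<pi> permutes {..<?n}}"
  define f where "f a b = ev1 p (bs ! a) (vs ! b)" for a b
  have permS: "permutation \<sigma>" using sg permutation_permutes by blast
  have permi: "permutation (inv \<sigma>)" using permS permutation_inverse by blast
  have sq: "of_int (sign \<sigma>) * of_int (sign \<sigma>) = (1::real)"
    by (simp add: sign_def)
  have L: "E p bs' vs = (\<Sum>\<pi>\<in>?S. of_int (sign \<pi>) * (\<Prod>a<?n. f a (\<pi> (inv \<sigma> a))))"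
  proof -
    have "E p bs' vs = (\<Sum>\<pi>\<in>?S. of_int (sign \<pi>) * (\<Prod>a<?n. f (\<sigma> a) (\<pi> a)))"
      using True len nth by (simp add: E_def mono_eval_def f_def)
    also have "\<dots> = (\<Sum>\<pi>\<in>?S. of_int (sign \<pi>) * (\<Prod>a<?n. f a (\<pi> (inv \<sigma> a))))"
    proof (rule sum.cong[OF refl])
      fix \<pi> assume "\<pi> \<in> ?S"
      have "(\<Prod>a<?n. f a (\<pi> (inv \<sigma> a))) = (\<Prod>a<?n. ((\<lambda>a. f a (\<pi> (inv \<sigma> a))) \<circ> \<sigma>) a)"
        using prod.permute[OF sg, of "\<lambda>a. f a (\<pi> (inv \<sigma> a))"] by simp
      also have "\<dots> = (\<Prod>a<?n. f (\<sigma> a) (\<pi> a))"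
        using permutes_inverses(2)[OF sg] by simp
      finally show "of_int (sign \<pi>) * (\<Prod>a<?n. f (\<sigma> a) (\<pi> a)) = of_int (sign \<pi>) * (\<Prod>a<?n. f a (\<pi> (inv \<sigma> a)))" by simp
    qed
    finally show ?thesis .
  qed
  have R: "E p bs vs = (\<Sum>\<pi>\<in>?S. of_int (sign (\<pi> \<circ> inv \<sigma>)) * (\<Prod>a<?n. f a ((\<pi> \<circ> inv \<sigma>) a)))"
    using True sum_permutations_compose_right[OF permutes_inv[OF sg], of "\<lambda>\<pi>. of_int (sign \<pi>) * (\<Prod>a<?n. f a (\<pi> a))"]
    by (simp add: E_def mono_eval_def f_def)
  have "of_int (sign \<sigma>) * E p bs vs = (\<Sum>\<pi>\<in>?S. of_int (sign \<pi>) * (\<Prod>a<?n. f a (\<pi> (inv \<sigma> a))))"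
    unfolding R sum_distrib_left
  proof (rule sum.cong[OF refl])
    fix \<pi> assume "\<pi> \<in> ?S"
    hence "permutation \<pi>" using permutation_permutes by blast
    hence "sign (\<pi> \<circ> inv \<sigma>) = sign \<pi> * sign \<sigma>"
      using sign_compose[OF _ permi] sign_inverse[OF permS] by simp
    thus "of_int (sign \<sigma>) * (of_int (sign (\<pi> \<circ> inv \<sigma>)) * (\<Prod>a<?n. f a ((\<pi> \<circ> inv \<sigma>) a))) =
         of_int (sign \<pi>) * (\<Prod>a<?n. f a (\<pi> (inv \<sigma> a)))"
      using sq by (simp add: algebra_simps)
  qed
  with L show ?thesis by simp
qed

lemma sw1: "Transposition.transpose (length xs) (Suc (length xs)) permutes {..<length (xs @ x # y # zs)}"
  by (rule permutes_swap_id) auto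

lemma sw2: "a < length (xs @ x # y # zs) \<Longrightarrow> (xs @ y # x # zs) ! a = (xs @ x # y # zs) ! (Transposition.transpose (length xs) (Suc (length xs)) a)"
proof -
  assume "a < length (xs @ x # y # zs)"
  consider "a < length xs" | "a = length xs" | "a = Suc (length xs)" | "a > Suc (length xs)" by linarith
  thus ?thesis
  proof cases
    case 4
    hence t: "Transposition.transpose (length xs) (Suc (length xs)) a = a" by simp
    obtain j where j: "a = Suc (Suc (length xs)) + j" using 4 by (intro that[of "a - Suc (Suc (length xs))"]) simp
    show ?thesis unfolding t j by (simp add: nth_append)
  qed (simp_all add: nth_append)
qed

lemma E_swap: "E p (xs @ y # x # zs) vs = - E p (xs @ x # y # zs) vs"
proof -
  have "E p (xs @ y # x # zs) vs = of_int (sign (Transposition.transpose (length xs) (Suc (length xs)))) * E p (xs @ x # y # zs) vs"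
  proof (rule E_perm[OF sw1])
    show "length (xs @ y # x # zs) = length (xs @ x # y # zs)" by simp
    show "\<forall>a<length (xs @ x # y # zs). (xs @ y # x # zs) ! a = (xs @ x # y # zs) ! Transposition.transpose (length xs) (Suc (length xs)) a"
      using sw2[of _ xs x y zs] by blast
  qed
  thus ?thesis by (simp add: sign_swap_id)
qed

lemma E_move: "E p (ys @ zs @ [b]) vs = (-1) ^ length zs * E p (ys @ b # zs) vs"
proof (induction zs arbitrary: ys)
  case Nil show ?case by simp
next
  case (Cons z zs)
  have 1: "ys @ (z # zs) @ [b] = (ys @ [z]) @ zs @ [b]" by simp
  have 2: "(ys @ [z]) @ b # zs = ys @ z # b # zs" by simp
  have 3: "E p (ys @ z # b # zs) vs = - E p (ys @ b # z # zs) vs" by (rule E_swap)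
  have "E p (ys @ (z # zs) @ [b]) vs = (-1) ^ length zs * E p (ys @ z # b # zs) vs"
    unfolding 1 Cons.IH[of "ys @ [z]"] 2 by (rule refl)
  also have "\<dots> = (-1) ^ length (z # zs) * E p (ys @ b # z # zs) vs"
    unfolding 3 by simp
  finally show ?case .
qed

lemma E_end: "E p (es @ [b]) vs = (-1) ^ length es * E p (b # es) vs"
  using E_move[of p "[]" es b vs] by (simp only: append_Nil)



definition dif :: "'c \<Rightarrow> (('c \<Rightarrow> real) \<Rightarrow> real) \<Rightarrow> ('c \<Rightarrow> real) \<Rightarrow> bool" where
  "dif c f p \<longleftrightarrow> (\<lambda>h. f (p(c := p c + h))) differentiable (at 0)"

lemma pd_zero: "(\<And>h. f (p(c := p c + h)) = f p) \<Longrightarrow> pd c f p = 0"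
  unfolding pd_def by simp

lemma pd_DERIV: "dif c f p \<Longrightarrow> ((\<lambda>h. f (p(c := p c + h))) has_real_derivative pd c f p) (at 0)"
  unfolding pd_def dif_def using DERIV_deriv_iff_real_differentiable by blast

lemma pd_cmult: assumes "dif c f p" shows "pd c (\<lambda>q. a * f q) p = a * pd c f p"
proof -
  have "((\<lambda>h. a * f (p(c := p c + h))) has_real_derivative a * pd c f p) (at 0)"
    by (rule DERIV_cmult[OF pd_DERIV[OF assms]])
  thus ?thesis unfolding pd_def by (rule DERIV_imp_deriv)
qed

lemma pd_lin2:
  assumes "finite A" "finite B" "\<And>x y. x \<in> A \<Longrightarrow> y \<in> B \<Longrightarrow> dif c (f x y) p"
  shows "pd c (\<lambda>q. \<Sum>x\<in>A. \<Sum>y\<in>B. f x y q * a x y) p = (\<Sum>x\<in>A. \<Sum>y\<in>B. pd c (f x y) p * a x y)"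
proof -
  have "((\<lambda>h. \<Sum>x\<in>A. \<Sum>y\<in>B. f x y (p(c := p c + h)) * a x y) has_real_derivative
        (\<Sum>x\<in>A. \<Sum>y\<in>B. pd c (f x y) p * a x y)) (at 0)"
    using assms by (intro DERIV_sum DERIV_cmult_right pd_DERIV) auto
  thus ?thesis unfolding pd_def by (rule DERIV_imp_deriv)
qed

lemma upd_DERIV: "((\<lambda>h. (\<xi>(c := \<xi> c + h)) x) has_real_derivative (if x = c then 1 else 0)) (at 0)"
proof (cases "x = c")
  case True thus ?thesis by (auto intro!: derivative_eq_intros)
next
  case False thus ?thesis by simp
qed

lemma pd_xi_lin2:
  assumes "finite A" "finite B"
  shows "pd c (\<lambda>\<xi>. \<Sum>x\<in>A. \<Sum>y\<in>B. a x y * \<xi> (g x y)) \<xi> = (\<Sum>x\<in>A. \<Sum>y\<in>B. a x y * (if g x y = c then 1 else 0))"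
proof -
  have "((\<lambda>h. \<Sum>x\<in>A. \<Sum>y\<in>B. a x y * (\<xi>(c := \<xi> c + h)) (g x y)) has_real_derivative
        (\<Sum>x\<in>A. \<Sum>y\<in>B. a x y * (if g x y = c then 1 else 0))) (at 0)"
    using assms by (intro DERIV_sum DERIV_cmult upd_DERIV)
  thus ?thesis unfolding pd_def by (rule DERIV_imp_deriv)
qed

lemma depends_mono: "depends_upto k f \<Longrightarrow> k \<le> K \<Longrightarrow> depends_upto K f"
  unfolding depends_upto_def by (meson order_trans)

lemma fd_eq:
  fixes f :: "('n::finite, 'm::finite) pt \<Rightarrow> real"
  assumes "depends_upto K f"
  shows "fd i f p = pd (X i) f p + (\<Sum>s\<in>UNIV. \<Sum>J\<in>{J::'n multiset. size J \<le> K}. p (Y s (J + {#i#})) * pd (Y s J) f p)"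
proof -
  have le: "ford f \<le> K" unfolding ford_def using assms by (rule Least_le)
  have dep: "depends_upto (ford f) f" unfolding ford_def using assms by (rule LeastI)
  have "(\<Sum>J\<in>{J::'n multiset. size J \<le> ford f}. p (Y s (J + {#i#})) * pd (Y s J) f p)
      = (\<Sum>J\<in>{J::'n multiset. size J \<le> K}. p (Y s (J + {#i#})) * pd (Y s J) f p)" for s
  proof (rule sum.mono_neutral_left[OF fin_msets])
    show "{J::'n multiset. size J \<le> ford f} \<subseteq> {J. size J \<le> K}" using le by auto
    show "\<forall>J\<in>{J. size J \<le> K} - {J. size J \<le> ford f}. p (Y s (J + {#i#})) * pd (Y s J) f p = 0"
    proof
      fix J assume "J \<in> {J::'n multiset. size J \<le> K} - {J. size J \<le> ford f}"
      hence "size J > ford f" by auto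
      hence "pd (Y s J) f p = 0"
        by (intro pd_zero) (use dep in \<open>auto simp: depends_upto_def\<close>)
      thus "p (Y s (J + {#i#})) * pd (Y s J) f p = 0" by simp
    qed
  qed
  thus ?thesis unfolding fd_def by simp
qed

lemma fd_cmult:
  fixes f :: "('n::finite, 'm::finite) pt \<Rightarrow> real"
  assumes "depends_upto K f" "\<And>c. dif c f p"
  shows "fd i (\<lambda>q. a * f q) p = a * fd i f p"
proof -
  have d: "depends_upto K (\<lambda>q. a * f q)" using assms(1) unfolding depends_upto_def by metis
  show ?thesis unfolding fd_eq[OF d] fd_eq[OF assms(1)] pd_cmult[OF assms(2)]
    by (simp add: sum_distrib_left algebra_simps)
qed

lemma fdX_eq:
  fixes F :: "('n::finite, 'm::finite) xcoef"
  assumes "dependsF K F"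
  shows "fdX l F p \<xi> = pd (X l) (\<lambda>q. F q \<xi>) p
     + (\<Sum>s\<in>UNIV. \<Sum>J\<in>{J::'n multiset. size J \<le> K}. p (Y s (J + {#l#})) * pd (Y s J) (\<lambda>q. F q \<xi>) p)
     + (\<Sum>s\<in>UNIV. \<Sum>J\<in>{J::'n multiset. size J \<le> K}. \<xi> (s, J + {#l#}) * pd (s, J) (F p) \<xi>)"
proof -
  have le: "fordF F \<le> K" unfolding fordF_def using assms by (rule Least_le)
  have dep: "dependsF (fordF F) F" unfolding fordF_def using assms by (rule LeastI)
  have 1: "(\<Sum>J\<in>{J::'n multiset. size J \<le> fordF F}. p (Y s (J + {#l#})) * pd (Y s J) (\<lambda>q. F q \<xi>) p)
      = (\<Sum>J\<in>{J::'n multiset. size J \<le> K}. p (Y s (J + {#l#})) * pd (Y s J) (\<lambda>q. F q \<xi>) p)" for s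
  proof (rule sum.mono_neutral_left[OF fin_msets])
    show "{J::'n multiset. size J \<le> fordF F} \<subseteq> {J. size J \<le> K}" using le by auto
    show "\<forall>J\<in>{J. size J \<le> K} - {J. size J \<le> fordF F}. p (Y s (J + {#l#})) * pd (Y s J) (\<lambda>q. F q \<xi>) p = 0"
    proof
      fix J assume "J \<in> {J::'n multiset. size J \<le> K} - {J. size J \<le> fordF F}"
      hence "size J > fordF F" by auto
      hence "pd (Y s J) (\<lambda>q. F q \<xi>) p = 0"
        by (intro pd_zero) (use dep in \<open>auto simp: dependsF_def\<close>)
      thus "p (Y s (J + {#l#})) * pd (Y s J) (\<lambda>q. F q \<xi>) p = 0" by simp
    qed
  qed
  have 2: "(\<Sum>J\<in>{J::'n multiset. size J \<le> fordF F}. \<xi> (s, J + {#l#}) * pd (s, J) (F p) \<xi>)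
      = (\<Sum>J\<in>{J::'n multiset. size J \<le> K}. \<xi> (s, J + {#l#}) * pd (s, J) (F p) \<xi>)" for s
  proof (rule sum.mono_neutral_left[OF fin_msets])
    show "{J::'n multiset. size J \<le> fordF F} \<subseteq> {J. size J \<le> K}" using le by auto
    show "\<forall>J\<in>{J. size J \<le> K} - {J. size J \<le> fordF F}. \<xi> (s, J + {#l#}) * pd (s, J) (F p) \<xi> = 0"
    proof
      fix J assume "J \<in> {J::'n multiset. size J \<le> K} - {J. size J \<le> fordF F}"
      hence "size J > fordF F" by auto
      hence "pd (s, J) (F p) \<xi> = 0"
        by (intro pd_zero) (use dep in \<open>auto simp: dependsF_def\<close>)
      thus "\<xi> (s, J + {#l#}) * pd (s, J) (F p) \<xi> = 0" by simp
    qed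
  qed
  show ?thesis unfolding fdX_def 1 2 by simp
qed



lemma swap4: "(\<Sum>s\<in>S. \<Sum>m\<in>M. \<Sum>j\<in>J. \<Sum>g\<in>G. f s m j g) = (\<Sum>j\<in>J. \<Sum>g\<in>G. \<Sum>s\<in>S. \<Sum>m\<in>M. f s m j g)"
proof -
  have "(\<Sum>s\<in>S. \<Sum>m\<in>M. \<Sum>j\<in>J. \<Sum>g\<in>G. f s m j g) = (\<Sum>s\<in>S. \<Sum>j\<in>J. \<Sum>m\<in>M. \<Sum>g\<in>G. f s m j g)"
    by (rule sum.cong[OF refl], rule sum.swap)
  also have "\<dots> = (\<Sum>s\<in>S. \<Sum>j\<in>J. \<Sum>g\<in>G. \<Sum>m\<in>M. f s m j g)"
    by (intro sum.cong refl, rule sum.swap)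
  also have "\<dots> = (\<Sum>j\<in>J. \<Sum>s\<in>S. \<Sum>g\<in>G. \<Sum>m\<in>M. f s m j g)"
    by (rule sum.swap)
  also have "\<dots> = (\<Sum>j\<in>J. \<Sum>g\<in>G. \<Sum>s\<in>S. \<Sum>m\<in>M. f s m j g)"
    by (intro sum.cong refl, rule sum.swap)
  finally show ?thesis .
qed

lemma fdX_Tpair:
  fixes t :: "'n list \<Rightarrow> 'n list \<Rightarrow> 'm \<Rightarrow> ('n::finite, 'm::finite) pt \<Rightarrow> real"
  assumes dep: "\<And>J \<sigma>. depends_upto k (t I J \<sigma>)" and dif: "\<And>J \<sigma> c. dif c (t I J \<sigma>) p"
  shows "fdX l (Tpair r t I) p \<xi> = (\<Sum>J\<in>{J. length J < r}. \<Sum>\<sigma>\<in>UNIV.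
           fd l (t I J \<sigma>) p * \<xi> (\<sigma>, mset J) + t I J \<sigma> p * \<xi> (\<sigma>, mset J + {#l#}))"
proof -
  define K where "K = k + r"
  define Js where "Js = {J::'n list. length J < r}"
  define Ms where "Ms = {M::'n multiset. size M \<le> K}"
  have finJ: "finite Js" unfolding Js_def by (rule fin_lists_lt)
  have finM: "finite Ms" unfolding Ms_def by (rule fin_msets)
  have depK: "depends_upto K (t I J \<sigma>)" for J \<sigma> using depends_mono[OF dep] K_def by simp
  have TP: "Tpair r t I q \<xi>' = (\<Sum>J\<in>Js. \<Sum>\<sigma>\<in>UNIV. t I J \<sigma> q * \<xi>' (\<sigma>, mset J))" for q \<xi>'
    unfolding Tpair_def Js_def by simp
  have dF: "dependsF K (Tpair r t I)"
    unfolding dependsF_def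
  proof (intro allI impI)
    fix q q' :: "('n, 'm) pt" and \<xi>1 \<xi>2 :: "'m \<times> 'n multiset \<Rightarrow> real"
    assume a1: "\<forall>c. cord c \<le> K \<longrightarrow> q c = q' c" and a2: "\<forall>s J. size J \<le> K \<longrightarrow> \<xi>1 (s, J) = \<xi>2 (s, J)"
    show "Tpair r t I q \<xi>1 = Tpair r t I q' \<xi>2"
      unfolding TP
    proof (intro sum.cong refl)
      fix J \<sigma> assume "J \<in> Js"
      hence "size (mset J) \<le> K" unfolding Js_def K_def by simp
      hence "\<xi>1 (\<sigma>, mset J) = \<xi>2 (\<sigma>, mset J)" using a2 by blast
      moreover have "t I J \<sigma> q = t I J \<sigma> q'" using depK[of J \<sigma>] a1 unfolding depends_upto_def by (elim allE[of _ q] allE[of _ q'] impE) (rule a1)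
      ultimately show "t I J \<sigma> q * \<xi>1 (\<sigma>, mset J) = t I J \<sigma> q' * \<xi>2 (\<sigma>, mset J)" by simp
    qed
  qed
  have T1: "pd c (\<lambda>q. Tpair r t I q \<xi>) p = (\<Sum>J\<in>Js. \<Sum>\<sigma>\<in>UNIV. pd c (t I J \<sigma>) p * \<xi> (\<sigma>, mset J))" for c
    unfolding TP by (rule pd_lin2[OF finJ finite_class.finite_UNIV dif])
  have T3: "pd c (Tpair r t I p) \<xi> = (\<Sum>J\<in>Js. \<Sum>\<sigma>\<in>UNIV. t I J \<sigma> p * (if (\<sigma>, mset J) = c then 1 else 0))" for c
  proof -
    have "Tpair r t I p = (\<lambda>\<xi>'. \<Sum>J\<in>Js. \<Sum>\<sigma>\<in>UNIV. t I J \<sigma> p * \<xi>' (\<sigma>, mset J))" by (rule ext) (rule TP)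
    thus ?thesis using pd_xi_lin2[OF finJ finite_class.finite_UNIV, of c "\<lambda>J \<sigma>. t I J \<sigma> p" "\<lambda>J \<sigma>. (\<sigma>, mset J)" \<xi>] by simp
  qed
  have e3: "(\<Sum>s\<in>UNIV. \<Sum>M\<in>Ms. \<xi> (s, M + {#l#}) * (t I J \<sigma> p * (if (\<sigma>, mset J) = (s, M) then 1 else 0)))
      = t I J \<sigma> p * \<xi> (\<sigma>, mset J + {#l#})" if "J \<in> Js" for J \<sigma>
  proof -
    have mJ: "mset J \<in> Ms" using that unfolding Js_def Ms_def K_def by simp
    have "(\<Sum>M\<in>Ms. \<xi> (s, M + {#l#}) * (t I J \<sigma> p * (if (\<sigma>, mset J) = (s, M) then 1 else 0)))
        = (if s = \<sigma> then t I J \<sigma> p * \<xi> (\<sigma>, mset J + {#l#}) else 0)" for s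
    proof (cases "s = \<sigma>")
      case True
      have "(\<Sum>M\<in>Ms. \<xi> (s, M + {#l#}) * (t I J \<sigma> p * (if (\<sigma>, mset J) = (s, M) then 1 else 0)))
          = (\<Sum>M\<in>Ms. if mset J = M then \<xi> (s, M + {#l#}) * t I J \<sigma> p else 0)"
        using True by (intro sum.cong refl) auto
      also have "\<dots> = \<xi> (s, mset J + {#l#}) * t I J \<sigma> p" using sum.delta'[OF finM, of "mset J" "\<lambda>M. \<xi> (s, M + {#l#}) * t I J \<sigma> p"] mJ by simp
      finally show ?thesis using True by simp
    qed simp
    thus ?thesis by simp
  qed
  have "fdX l (Tpair r t I) p \<xi> = (\<Sum>J\<in>Js. \<Sum>\<sigma>\<in>UNIV. pd (X l) (t I J \<sigma>) p * \<xi> (\<sigma>, mset J))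
     + (\<Sum>s\<in>UNIV. \<Sum>M\<in>Ms. \<Sum>J\<in>Js. \<Sum>\<sigma>\<in>UNIV. p (Y s (M + {#l#})) * (pd (Y s M) (t I J \<sigma>) p * \<xi> (\<sigma>, mset J)))
     + (\<Sum>s\<in>UNIV. \<Sum>M\<in>Ms. \<Sum>J\<in>Js. \<Sum>\<sigma>\<in>UNIV. \<xi> (s, M + {#l#}) * (t I J \<sigma> p * (if (\<sigma>, mset J) = (s, M) then 1 else 0)))"
    unfolding fdX_eq[OF dF] T1 T3 Ms_def[symmetric] by (simp add: sum_distrib_left)
  also have "\<dots> = (\<Sum>J\<in>Js. \<Sum>\<sigma>\<in>UNIV. pd (X l) (t I J \<sigma>) p * \<xi> (\<sigma>, mset J))
     + (\<Sum>J\<in>Js. \<Sum>\<sigma>\<in>UNIV. \<Sum>s\<in>UNIV. \<Sum>M\<in>Ms. p (Y s (M + {#l#})) * (pd (Y s M) (t I J \<sigma>) p * \<xi> (\<sigma>, mset J)))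
     + (\<Sum>J\<in>Js. \<Sum>\<sigma>\<in>UNIV. \<Sum>s\<in>UNIV. \<Sum>M\<in>Ms. \<xi> (s, M + {#l#}) * (t I J \<sigma> p * (if (\<sigma>, mset J) = (s, M) then 1 else 0)))"
    by (intro arg_cong2[where f="(+)"] refl swap4)
  also have "\<dots> = (\<Sum>J\<in>Js. \<Sum>\<sigma>\<in>UNIV. fd l (t I J \<sigma>) p * \<xi> (\<sigma>, mset J) + t I J \<sigma> p * \<xi> (\<sigma>, mset J + {#l#}))"
  proof -
    have a3: "(\<Sum>J\<in>Js. \<Sum>\<sigma>\<in>UNIV. \<Sum>s\<in>UNIV. \<Sum>M\<in>Ms. \<xi> (s, M + {#l#}) * (t I J \<sigma> p * (if (\<sigma>, mset J) = (s, M) then 1 else 0)))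
        = (\<Sum>J\<in>Js. \<Sum>\<sigma>\<in>UNIV. t I J \<sigma> p * \<xi> (\<sigma>, mset J + {#l#}))"
      by (intro sum.cong refl) (rule e3)
    have a12: "(\<Sum>J\<in>Js. \<Sum>\<sigma>\<in>UNIV. pd (X l) (t I J \<sigma>) p * \<xi> (\<sigma>, mset J))
     + (\<Sum>J\<in>Js. \<Sum>\<sigma>\<in>UNIV. \<Sum>s\<in>UNIV. \<Sum>M\<in>Ms. p (Y s (M + {#l#})) * (pd (Y s M) (t I J \<sigma>) p * \<xi> (\<sigma>, mset J)))
     = (\<Sum>J\<in>Js. \<Sum>\<sigma>\<in>UNIV. fd l (t I J \<sigma>) p * \<xi> (\<sigma>, mset J))"
    proof -
      have "fd l (t I J \<sigma>) p * \<xi> (\<sigma>, mset J) = pd (X l) (t I J \<sigma>) p * \<xi> (\<sigma>, mset J)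
          + (\<Sum>s\<in>UNIV. \<Sum>M\<in>Ms. p (Y s (M + {#l#})) * (pd (Y s M) (t I J \<sigma>) p * \<xi> (\<sigma>, mset J)))" for J \<sigma>
        unfolding fd_eq[OF depK] Ms_def[symmetric] distrib_right sum_distrib_right mult.assoc ..
      thus ?thesis by (simp add: sum.distrib)
    qed
    show ?thesis unfolding sum.distrib a3 a12[symmetric] by simp
  qed
  finally show ?thesis unfolding Js_def .
qed



definition good :: "('n::finite, 'm) form \<Rightarrow> bool" where
  "good A \<longleftrightarrow> (\<forall>m\<in>set A. (\<exists>v. fst m = (\<lambda>_. v)) \<and> (\<forall>b\<in>set (snd m). \<exists>j. b = DX j))"

lemma good_contr_dx: fixes A :: "('n::finite, 'm) form" and i :: 'n assumes "good A" shows "good (contr (dxvec i) A)"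
  unfolding good_def
proof
  fix m assume "m \<in> set (contr (dxvec i) A)"
  then obtain c bs a where cb: "(c, bs) \<in> set A" and a: "a < length bs"
    and m: "m = ((\<lambda>p. (-1) ^ a * c p * ev1 p (bs ! a) (dxvec i p)), take a bs @ drop (Suc a) bs)"
    unfolding contr_def by auto
  from assms cb obtain v where v: "c = (\<lambda>_. v)" and bs: "\<forall>b\<in>set bs. \<exists>j. b = DX j"
    unfolding good_def by fastforce
  from bs a obtain j where j: "bs ! a = DX j" using nth_mem by blast
  have "fst m = (\<lambda>_. (-1) ^ a * v * (if X j = (X i :: ('n,'m) coord) then 1 else 0))"
    using m v j by (simp add: dxvec_def)
  moreover have "\<forall>b\<in>set (snd m). \<exists>j. b = DX j"
    using m bs by (auto dest: in_set_takeD in_set_dropD)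
  ultimately show "(\<exists>v. fst m = (\<lambda>_. v)) \<and> (\<forall>b\<in>set (snd m). \<exists>j. b = DX j)" by blast
qed

lemma good_fold: "good A \<Longrightarrow> good (fold (\<lambda>i \<rho>. contr (dxvec i) \<rho>) I A)"
  by (induction I arbitrary: A) (auto intro: good_contr_dx)

lemma good_dsI: "good (dsI I :: ('n::{finite,linorder}, 'm) form)"
  unfolding dsI_def
  by (rule good_fold) (auto simp: good_def ds_def)

lemma sum_list_zero: "(\<And>x. x \<in> set xs \<Longrightarrow> f x = 0) \<Longrightarrow> sum_list (map f xs) = (0::real)"
  by (induction xs) auto

lemma contr_Cons: "contr xi (m # A) = contr xi [m] @ contr xi A"
  unfolding contr_def by simp

lemma contr_head:
  assumes rest: "\<forall>b\<in>set rest. \<exists>j. b = DX j" and xi: "\<forall>j. xi p (X j) = 0"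
  shows "form_eval p (contr xi [(c', b # rest)]) vs = c' p * ev1 p b (xi p) * E p rest vs"
proof -
  define f where "f a = (-1) ^ a * c' p * ev1 p ((b # rest) ! a) (xi p) * E p (take a (b # rest) @ drop (Suc a) (b # rest)) vs" for a
  have "form_eval p (contr xi [(c', b # rest)]) vs = sum_list (map f [0..<Suc (length rest)])"
    unfolding contr_def fe_list f_def by (simp add: o_def del: upt_Suc)
  also have "\<dots> = f 0 + sum_list (map f [Suc 0..<Suc (length rest)])"
    by (subst upt_conv_Cons) simp_all
  also have "sum_list (map f [Suc 0..<Suc (length rest)]) = 0"
  proof (rule sum_list_zero)
    fix a assume "a \<in> set [Suc 0..<Suc (length rest)]"
    hence a: "0 < a" "a - 1 < length rest" by auto
    then obtain j where "rest ! (a - 1) = DX j" using rest nth_mem by blast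
    hence "(b # rest) ! a = DX j" using a by (simp add: nth_Cons')
    thus "f a = 0" using xi by (simp add: f_def)
  qed
  finally show ?thesis by (simp add: f_def)
qed

lemma tot_d_mono:
  assumes es: "\<forall>b\<in>set es. \<exists>j. b = DX j"
  shows "tot_d i [(c, OM \<sigma> M # es)] = [(fd i c, OM \<sigma> M # es), (c, OM \<sigma> (M + {#i#}) # es)]"
proof -
  define g where "g a = (case dshift i ((OM \<sigma> M # es) ! a) of None \<Rightarrow> [] | Some b \<Rightarrow> [(c, (OM \<sigma> M # es)[a := b])])" for a
  have nil: "concat (map g [Suc 0..<Suc (length es)]) = []"
    unfolding concat_eq_Nil_conv
  proof
    fix xs assume "xs \<in> set (map g [Suc 0..<Suc (length es)])"
    then obtain a where xs: "xs = g a" and aset: "a \<in> set [Suc 0..<Suc (length es)]"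
      unfolding set_map by (rule imageE)
    from aset have a: "0 < a" "a - 1 < length es" by auto
    then obtain j where "es ! (a - 1) = DX j" using es nth_mem by blast
    hence "(OM \<sigma> M # es) ! a = DX j" using a by (simp add: nth_Cons')
    thus "xs = []" using xs by (simp add: g_def)
  qed
  have all: "concat (map g [0..<Suc (length es)]) = [(c, OM \<sigma> (M + {#i#}) # es)]"
    by (subst upt_conv_Cons, simp, simp only: list.map concat.simps nil, simp add: g_def)
  show ?thesis unfolding tot_d_def using all unfolding g_def by (simp del: upt_Suc)
qed

lemma ev1_jprol_OM: "size M \<le> r \<Longrightarrow> ev1 p (OM \<sigma> M) (jprol r Xi p) = xijet Xi \<sigma> M p"
  by (simp add: jprol_def)

lemma jprol_X: "jprol r Xi p (X j) = 0"
  by (simp add: jprol_def)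

lemma rhs_mono:
  assumes es: "\<forall>b\<in>set es. \<exists>j. b = DX j" and M: "size M < r"
  shows "form_eval p (contr (jprol r Xi) (dH [(c, OM \<sigma> M # es)])) vs =
    (\<Sum>i\<in>UNIV. (-1) ^ Suc (length es) * (fd i c p * xijet Xi \<sigma> M p + c p * xijet Xi \<sigma> (M + {#i#}) p)
        * ((-1) ^ length es * E p (DX i # es) vs))"
proof -
  have es2: "\<forall>b\<in>set (es @ [DX i]). \<exists>j. b = DX j" for i using es by auto
  have xi: "\<forall>j. jprol r Xi p (X j) = 0" by (simp add: jprol_X)
  have ch: "form_eval p (contr (jprol r Xi) [(c'', b # es @ [DX i])]) vs = c'' p * ev1 p b (jprol r Xi p) * E p (es @ [DX i]) vs" for c'' b i
    by (rule contr_head) (rule es2, rule xi)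
  have dh: "dH [(c, OM \<sigma> M # es)] = fsum UNIV (\<lambda>i.
      [((\<lambda>p. (-1) ^ Suc (length es) * fd i c p), OM \<sigma> M # es @ [DX i]),
       ((\<lambda>p. (-1) ^ Suc (length es) * c p), OM \<sigma> (M + {#i#}) # es @ [DX i])])"
    unfolding dH_def by (simp add: tot_d_mono[OF es])
  have "form_eval p (contr (jprol r Xi) (dH [(c, OM \<sigma> M # es)])) vs =
     (\<Sum>i\<in>UNIV. form_eval p (contr (jprol r Xi) [((\<lambda>p. (-1) ^ Suc (length es) * fd i c p), OM \<sigma> M # es @ [DX i])]) vs
       + form_eval p (contr (jprol r Xi) [((\<lambda>p. (-1) ^ Suc (length es) * c p), OM \<sigma> (M + {#i#}) # es @ [DX i])]) vs)"
    unfolding dh contr_fsum fe_fsum[OF finite_class.finite_UNIV]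
    by (subst contr_Cons) simp
  also have "\<dots> = (\<Sum>i\<in>UNIV. (-1) ^ Suc (length es) * fd i c p * xijet Xi \<sigma> M p * E p (es @ [DX i]) vs
       + (-1) ^ Suc (length es) * c p * xijet Xi \<sigma> (M + {#i#}) p * E p (es @ [DX i]) vs)"
    unfolding ch using M by (simp add: jprol_def)
  also have "\<dots> = (\<Sum>i\<in>UNIV. (-1) ^ Suc (length es) * (fd i c p * xijet Xi \<sigma> M p + c p * xijet Xi \<sigma> (M + {#i#}) p)
        * ((-1) ^ length es * E p (DX i # es) vs))"
    unfolding E_end by (simp add: algebra_simps)
  finally show ?thesis .
qed



lemma sum_list_sum_swap: "(\<Sum>x\<in>A. sum_list (map (f x) xs)) = sum_list (map (\<lambda>y. \<Sum>x\<in>A. f x y) xs)"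
  by (induction xs) (auto simp: sum.distrib)

lemma fin_lists_eq: "finite {I::'n::finite list. length I = s}"
proof -
  have "{I::'n list. length I = s} = {xs. set xs \<subseteq> UNIV \<and> length xs = s}" by auto
  thus ?thesis using finite_lists_length_eq[of "UNIV::'n set" s] by simp
qed

lemma per_mono:
  fixes t :: "'n list \<Rightarrow> 'n list \<Rightarrow> 'm \<Rightarrow> ('n::{finite,linorder}, 'm::finite) pt \<Rightarrow> real"
  assumes dep: "\<And>J \<sigma>. depends_upto k (t I J \<sigma>)" and dif: "\<And>J \<sigma> c. dif c (t I J \<sigma>) p"
    and es: "\<forall>b\<in>set es. \<exists>j. b = DX j"
  shows "(\<Sum>l\<in>UNIV. fdX l (Tpair r t I) p (\<lambda>(\<sigma>, J). xijet Xi \<sigma> J p) * v * E p (DX l # es) vs)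
    = (\<Sum>J\<in>{J. length J < r}. \<Sum>\<sigma>\<in>UNIV. form_eval p (contr (jprol r Xi) (dH [((\<lambda>q. - t I J \<sigma> q * v), OM \<sigma> (mset J) # es)])) vs)"
proof -
  define Js where "Js = {J::'n list. length J < r}"
  have sgn: "(-1::real) ^ Suc (length es) * (-1) ^ length es = -1"
  proof -
    have "(-1::real) ^ Suc (length es) * (-1) ^ length es = - (((-1) ^ length es) * ((-1) ^ length es))" by simp
    also have "((-1::real) ^ length es) * ((-1) ^ length es) = 1"
      by (simp add: power_mult_distrib[symmetric])
    finally show ?thesis by simp
  qed
  have fdc: "fd i (\<lambda>q. - t I J \<sigma> q * v) p = (- v) * fd i (t I J \<sigma>) p" for i J \<sigma>
  proof -
    have "(\<lambda>q. - t I J \<sigma> q * v) = (\<lambda>q. (- v) * t I J \<sigma> q)" by (rule ext) simp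
    thus ?thesis using fd_cmult[OF dep dif, of i "- v"] by (simp only:)
  qed
  have R: "form_eval p (contr (jprol r Xi) (dH [((\<lambda>q. - t I J \<sigma> q * v), OM \<sigma> (mset J) # es)])) vs
     = (\<Sum>i\<in>UNIV. v * (fd i (t I J \<sigma>) p * xijet Xi \<sigma> (mset J) p + t I J \<sigma> p * xijet Xi \<sigma> (mset J + {#i#}) p) * E p (DX i # es) vs)"
    if "J \<in> Js" for J \<sigma>
  proof -
    have "size (mset J) < r" using that unfolding Js_def by simp
    hence "form_eval p (contr (jprol r Xi) (dH [((\<lambda>q. - t I J \<sigma> q * v), OM \<sigma> (mset J) # es)])) vs =
      (\<Sum>i\<in>UNIV. (-1) ^ Suc (length es) * (fd i (\<lambda>q. - t I J \<sigma> q * v) p * xijet Xi \<sigma> (mset J) p + (- t I J \<sigma> p * v) * xijet Xi \<sigma> (mset J + {#i#}) p)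
        * ((-1) ^ length es * E p (DX i # es) vs))"
      by (rule rhs_mono[OF es])
    also have "\<dots> = (\<Sum>i\<in>UNIV. ((-1) ^ Suc (length es) * (-1) ^ length es) * (- v) * (fd i (t I J \<sigma>) p * xijet Xi \<sigma> (mset J) p + t I J \<sigma> p * xijet Xi \<sigma> (mset J + {#i#}) p)
        * E p (DX i # es) vs)"
      unfolding fdc by (intro sum.cong refl) (simp add: algebra_simps)
    also have "\<dots> = (\<Sum>i\<in>UNIV. v * (fd i (t I J \<sigma>) p * xijet Xi \<sigma> (mset J) p + t I J \<sigma> p * xijet Xi \<sigma> (mset J + {#i#}) p) * E p (DX i # es) vs)"
      unfolding sgn by simp
    finally show ?thesis .
  qed
  have "(\<Sum>J\<in>Js. \<Sum>\<sigma>\<in>UNIV. form_eval p (contr (jprol r Xi) (dH [((\<lambda>q. - t I J \<sigma> q * v), OM \<sigma> (mset J) # es)])) vs)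
     = (\<Sum>J\<in>Js. \<Sum>\<sigma>\<in>UNIV. \<Sum>i\<in>UNIV. v * (fd i (t I J \<sigma>) p * xijet Xi \<sigma> (mset J) p + t I J \<sigma> p * xijet Xi \<sigma> (mset J + {#i#}) p) * E p (DX i # es) vs)"
    by (intro sum.cong refl) (rule R)
  also have "\<dots> = (\<Sum>J\<in>Js. \<Sum>i\<in>UNIV. \<Sum>\<sigma>\<in>UNIV. v * (fd i (t I J \<sigma>) p * xijet Xi \<sigma> (mset J) p + t I J \<sigma> p * xijet Xi \<sigma> (mset J + {#i#}) p) * E p (DX i # es) vs)"
    by (intro sum.cong refl) (rule sum.swap)
  also have "\<dots> = (\<Sum>i\<in>UNIV. \<Sum>J\<in>Js. \<Sum>\<sigma>\<in>UNIV. v * (fd i (t I J \<sigma>) p * xijet Xi \<sigma> (mset J) p + t I J \<sigma> p * xijet Xi \<sigma> (mset J + {#i#}) p) * E p (DX i # es) vs)"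
    by (rule sum.swap)
  also have "\<dots> = (\<Sum>l\<in>UNIV. fdX l (Tpair r t I) p (\<lambda>(\<sigma>, J). xijet Xi \<sigma> J p) * v * E p (DX l # es) vs)"
  proof (intro sum.cong refl)
    fix l
    show "(\<Sum>J\<in>Js. \<Sum>\<sigma>\<in>UNIV. v * (fd l (t I J \<sigma>) p * xijet Xi \<sigma> (mset J) p + t I J \<sigma> p * xijet Xi \<sigma> (mset J + {#l#}) p) * E p (DX l # es) vs)
      = fdX l (Tpair r t I) p (\<lambda>(\<sigma>, J). xijet Xi \<sigma> J p) * v * E p (DX l # es) vs"
      unfolding fdX_Tpair[of k t I p l r "\<lambda>(\<sigma>, J). xijet Xi \<sigma> J p", OF dep dif] Js_def sum_distrib_right sum_distrib_left
      by (intro sum.cong refl) (simp add: algebra_simps)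
  qed
  finally show ?thesis unfolding Js_def by simp
qed



theorem proposition3p2:
  fixes W :: "(('n::{finite,linorder} \<Rightarrow> real) \<times> ('m::finite \<Rightarrow> real)) set"
    and s r k :: nat
    and t :: "'n list \<Rightarrow> 'n list \<Rightarrow> 'm \<Rightarrow> ('n, 'm) pt \<Rightarrow> real"
    and Xi :: "'m \<Rightarrow> ('n, 'm) pt \<Rightarrow> real"
  assumes "open W"
    and "s \<le> CARD('n)"
    and "\<forall>I J \<sigma>. depends_upto k (t I J \<sigma>) \<and> smooth_on (Dom W) (t I J \<sigma>)"
    and "\<forall>I J \<sigma> a b. length I = s \<longrightarrow> a < length I \<longrightarrow> b < length I \<longrightarrow> a \<noteq> b \<longrightarrow>
           t (I[a := I ! b, b := I ! a]) J \<sigma> = - t I J \<sigma>"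
    and "\<forall>I J J' \<sigma>. mset J = mset J' \<longrightarrow> t I J \<sigma> = t I J' \<sigma>"
    and "\<forall>\<sigma>. depends_upto 0 (Xi \<sigma>) \<and> smooth_on (Dom W) (Xi \<sigma>)"
  shows "form_eq (Dom W) (Div Xi s (Tpair r t)) (contr (jprol r Xi) (dH (Rt s r t)))"
  unfolding form_eq_def
proof (intro ballI allI)
  fix p vs assume pD: "p \<in> Dom W"
  have dep: "depends_upto k (t I J \<sigma>)" for I J \<sigma> using assms(3) by blast
  have dif: "dif c (t I J \<sigma>) p" for I J \<sigma> c
  proof -
    have "smooth_on (Dom W) (t I J \<sigma>)" using assms(3) by blast
    hence "\<forall>p\<in>Dom W. \<forall>c. (\<lambda>h. pds [] (t I J \<sigma>) (p(c := p c + h))) differentiable (at 0)"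
      unfolding smooth_on_def by blast
    thus ?thesis using pD unfolding dif_def by simp
  qed
  define Ss where "Ss = {I::'n list. length I = s}"
  define Js where "Js = {J::'n list. length J < r}"
  have finS: "finite Ss" unfolding Ss_def by (rule fin_lists_eq)
  have finJ: "finite Js" unfolding Js_def by (rule fin_lists_lt)
  have L: "form_eval p (Div Xi s (Tpair r t)) vs = (\<Sum>I\<in>Ss. sum_list (map (\<lambda>m. \<Sum>l\<in>UNIV.
      fdX l (Tpair r t I) p (\<lambda>(\<sigma>, J). xijet Xi \<sigma> J p) * fst m p * E p (DX l # snd m) vs) (dsI I)))"
    unfolding Div_def Ss_def[symmetric] fe_fsum[OF finS] fe_fsum[OF finite_class.finite_UNIV]
    unfolding wedge1 fe_list sum_list_sum_swap[symmetric]
    by (simp add: o_def case_prod_beta)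
  have R: "form_eval p (contr (jprol r Xi) (dH (Rt s r t))) vs = (\<Sum>I\<in>Ss. sum_list (map (\<lambda>m.
      \<Sum>J\<in>Js. \<Sum>\<sigma>\<in>UNIV. form_eval p (contr (jprol r Xi) (dH [((\<lambda>q. - t I J \<sigma> q * fst m q), OM \<sigma> (mset J) # snd m)])) vs) (dsI I)))"
  proof -
    have "form_eval p (contr (jprol r Xi) (dH (Rt s r t))) vs = (\<Sum>I\<in>Ss. \<Sum>J\<in>Js. \<Sum>\<sigma>\<in>UNIV.
      form_eval p (contr (jprol r Xi) (dH (wedge [((\<lambda>p. - t I J \<sigma> p), [OM \<sigma> (mset J)])] (dsI I)))) vs)"
      unfolding Rt_def Ss_def[symmetric] Js_def[symmetric] dH_fsum contr_fsum fe_fsum[OF finS] fe_fsum[OF finJ]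
        fe_fsum[OF finite_class.finite_UNIV] ..
    also have "\<dots> = (\<Sum>I\<in>Ss. \<Sum>J\<in>Js. \<Sum>\<sigma>\<in>UNIV. sum_list (map (\<lambda>m.
        form_eval p (contr (jprol r Xi) (dH [((\<lambda>q. - t I J \<sigma> q * fst m q), OM \<sigma> (mset J) # snd m)])) vs) (dsI I)))"
      unfolding wedge1
      by (subst dH_split, subst contr_concat, subst fe_concat) (simp add: o_def case_prod_beta)
    also have "\<dots> = (\<Sum>I\<in>Ss. sum_list (map (\<lambda>m.
      \<Sum>J\<in>Js. \<Sum>\<sigma>\<in>UNIV. form_eval p (contr (jprol r Xi) (dH [((\<lambda>q. - t I J \<sigma> q * fst m q), OM \<sigma> (mset J) # snd m)])) vs) (dsI I)))"
      by (simp only: sum_list_sum_swap)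
    finally show ?thesis .
  qed
  show "form_eval p (Div Xi s (Tpair r t)) vs = form_eval p (contr (jprol r Xi) (dH (Rt s r t))) vs"
    unfolding L R
  proof (intro sum.cong refl arg_cong[of _ _ sum_list] map_cong)
    fix I m assume "m \<in> set (dsI I :: ('n, 'm) form)"
    then obtain v where v: "fst m = (\<lambda>_. v)" and es: "\<forall>b\<in>set (snd m). \<exists>j. b = DX j"
      using good_dsI[of I] unfolding good_def by blast
    show "(\<Sum>l\<in>UNIV. fdX l (Tpair r t I) p (\<lambda>(\<sigma>, J). xijet Xi \<sigma> J p) * fst m p * E p (DX l # snd m) vs) =
      (\<Sum>J\<in>Js. \<Sum>\<sigma>\<in>UNIV. form_eval p (contr (jprol r Xi) (dH [((\<lambda>q. - t I J \<sigma> q * fst m q), OM \<sigma> (mset J) # snd m)])) vs)"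
      unfolding v Js_def by (rule per_mono[OF dep dif es])
  qed
qed

end
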